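(* Let $(X_j,Y_j,S_j)$, $j\in\mathbb{Z}$, be a FAIM process, and let $H_\infty$ be the almost-sure limit of its conditional entropy process $H_n$ (a $\{0,1\}$-valued random variable). Then: (1) $Z_n$ and $\hat Z_n$ polarize to random variables $Z_\infty$ and $\hat Z_\infty$, respectively, and $Z_\infty=\hat Z_\infty=H_\infty$ almost surely; (2) $K_n$ and $\hat K_n$ polarize to random variables $K_\infty$ and $\hat K_\infty$, respectively, and $K_\infty=\hat K_\infty=1-H_\infty$ almost surely.
   Context: FAIM process: $(X_j,Y_j,S_j)$, $j\in\mathbb{Z}$, is strictly stationary, $X_j\in\{0,1\}$, $Y_j$ takes values in a finite alphabet, $S_j$ in a finite set $\mathcal{S}$; the conditional law $P_{X_j,Y_j,S_j|S_{j-1}}$ does not depend on $j$; and conditioned on $S_{j-1}$, $\{X_k,Y_k,S_k\}_{k\ge j}$ is independent of $\{X_l,Y_l,S_{l-1}\}_{l<j}$. The state sequence $(S_j)$ is a homogeneous, finite-state, stationary, aperiodic and irreducible Markov chain. For binary $U$ and finite-valued $Q$: $Z(U|Q)=2\sum_q\sqrt{P_{U,Q}(0,q)P_{U,Q}(1,q)}$, $K(U|Q)=\sum_q|P_{U,Q}(0,q)-P_{U,Q}(1,q)|$, $H(U|Q)$ conditional entropy in bits; conditioning on several variables means using their tuple as the observation. Polarization setup: $N=2^n$, $G_N=B_NG_2^{\otimes n}$ with $G_2=\begin{bmatrix}1&0\\1&1\end{bmatrix}$ and $B_N$ the bit-reversal permutation matrix (arithmetic mod 2); $U_1^N=X_1^NG_N$,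 $Q_i=(U_1^{i-1},Y_1^N)$; $B_1,B_2,\dots$ i.i.d. Bernoulli$(1/2)$, $i-1=\sum_{j=1}^nB_j2^{n-j}$. Processes: $H_n=H(U_i|Q_i)$, $Z_n=Z(U_i|Q_i)$, $K_n=K(U_i|Q_i)$, and boundary-state-informed versions $\hat Z_n=Z(U_i|Q_i,S_N,S_0)$, $\hat K_n=K(U_i|Q_i,S_N,S_0)$. A $[0,1]$-valued sequence polarizes if it converges almost surely to a $\{0,1\}$-valued random variable. *)

theory Defs
  imports "HOL-Probability.Probability"
begin

definition Pev :: "'w measure \<Rightarrow> ('w \<Rightarrow> bool) \<Rightarrow> real" where
  "Pev M P = measure M {w \<in> space M. P w}"

text \<open>The triple (X_j, Y_j, S_j); bits X_j are encoded as bool (False = 0, True = 1).\<close>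
definition trip :: "(int \<Rightarrow> 'w \<Rightarrow> bool) \<Rightarrow> (int \<Rightarrow> 'w \<Rightarrow> 'y) \<Rightarrow> (int \<Rightarrow> 'w \<Rightarrow> 's)
    \<Rightarrow> int \<Rightarrow> 'w \<Rightarrow> bool \<times> 'y \<times> 's" where
  "trip X Y S j w = (X j w, Y j w, S j w)"

text \<open>Strict stationarity of a discrete-valued process, via all finite-dimensional
  distributions of contiguous windows (which determine all finite-dimensional laws).\<close>
definition strictly_stationary :: "'w measure \<Rightarrow> (int \<Rightarrow> 'w \<Rightarrow> 'a) \<Rightarrow> bool" where
  "strictly_stationary M Z \<longleftrightarrow>
     (\<forall>k a (m::nat) (v :: nat \<Rightarrow> 'a).
        Pev M (\<lambda>w. \<forall>i<m. Z (a + k + int i) w = v i) = Pev M (\<lambda>w. \<forall>i<m. Z (a + int i) w = v i))"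

text \<open>The state set is taken to be the set of states of
  positive probability, on which irreducibility and aperiodicity are required.\<close>
definition state_chain_ok :: "'w measure \<Rightarrow> (int \<Rightarrow> 'w \<Rightarrow> 's::finite) \<Rightarrow> bool" where
  "state_chain_ok M S \<longleftrightarrow>
     \<comment> \<open>Markov property\<close>
     (\<forall>j (n::nat) (v :: nat \<Rightarrow> 's) b. n > 0 \<longrightarrow>
        Pev M (\<lambda>w. S j w = b \<and> (\<forall>i<n. S (j - 1 - int i) w = v i)) * Pev M (\<lambda>w. S (j - 1) w = v 0)
        = Pev M (\<lambda>w. S j w = b \<and> S (j - 1) w = v 0) * Pev M (\<lambda>w. \<forall>i<n. S (j - 1 - int i) w = v i)) \<and>
     \<comment> \<open>homogeneity\<close>
     (\<forall>j k a b. Pev M (\<lambda>w. S j w = b \<and> S (j - 1) w = a) * Pev M (\<lambda>w. S (k - 1) w = a)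
              = Pev M (\<lambda>w. S k w = b \<and> S (k - 1) w = a) * Pev M (\<lambda>w. S (j - 1) w = a)) \<and>
     \<comment> \<open>stationarity\<close>
     (\<forall>j s. Pev M (\<lambda>w. S j w = s) = Pev M (\<lambda>w. S 0 w = s)) \<and>
     \<comment> \<open>irreducibility\<close>
     (\<forall>a b. Pev M (\<lambda>w. S 0 w = a) > 0 \<and> Pev M (\<lambda>w. S 0 w = b) > 0 \<longrightarrow>
        (\<exists>n::nat. n > 0 \<and> Pev M (\<lambda>w. S 0 w = a \<and> S (int n) w = b) > 0)) \<and>
     \<comment> \<open>aperiodicity: every state has period 1\<close>
     (\<forall>a. Pev M (\<lambda>w. S 0 w = a) > 0 \<longrightarrow>
        Gcd {n::nat. n > 0 \<and> Pev M (\<lambda>w. S 0 w = a \<and> S (int n) w = a) > 0} = 1)"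

definition faim :: "'w measure \<Rightarrow> (int \<Rightarrow> 'w \<Rightarrow> bool) \<Rightarrow> (int \<Rightarrow> 'w \<Rightarrow> 'y::finite)
    \<Rightarrow> (int \<Rightarrow> 'w \<Rightarrow> 's::finite) \<Rightarrow> bool" where
  "faim M X Y S \<longleftrightarrow>
     prob_space M \<and>
     (\<forall>j. X j \<in> measurable M (count_space UNIV) \<and> Y j \<in> measurable M (count_space UNIV)
          \<and> S j \<in> measurable M (count_space UNIV)) \<and>
     strictly_stationary M (trip X Y S) \<and>
     \<comment> \<open>the conditional law of (X_j,Y_j,S_j) given S_{j-1} does not depend on j\<close>
     (\<forall>j k v s. Pev M (\<lambda>w. trip X Y S j w = v \<and> S (j - 1) w = s) * Pev M (\<lambda>w. S (k - 1) w = s)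
              = Pev M (\<lambda>w. trip X Y S k w = v \<and> S (k - 1) w = s) * Pev M (\<lambda>w. S (j - 1) w = s)) \<and>
     \<comment> \<open>given S_{j-1}, the future (X_k,Y_k,S_k)_{k>=j} is independent of the past
         (X_l,Y_l,S_{l-1})_{l<j}  (all finite windows)\<close>
     (\<forall>j (m::nat) (n::nat) (f :: nat \<Rightarrow> bool \<times> 'y \<times> 's) (p :: nat \<Rightarrow> bool \<times> 'y \<times> 's) s.
        Pev M (\<lambda>w. (\<forall>i<m. trip X Y S (j + int i) w = f i)
                 \<and> (\<forall>i<n. (X (j - 1 - int i) w, Y (j - 1 - int i) w, S (j - 2 - int i) w) = p i)
                 \<and> S (j - 1) w = s) * Pev M (\<lambda>w. S (j - 1) w = s)
        = Pev M (\<lambda>w. (\<forall>i<m. trip X Y S (j + int i) w = f i) \<and> S (j - 1) w = s)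
          * Pev M (\<lambda>w. (\<forall>i<n. (X (j - 1 - int i) w, Y (j - 1 - int i) w, S (j - 2 - int i) w) = p i)
                 \<and> S (j - 1) w = s)) \<and>
     state_chain_ok M S"

definition jp :: "'w measure \<Rightarrow> ('w \<Rightarrow> bool) \<Rightarrow> ('w \<Rightarrow> 'q) \<Rightarrow> bool \<Rightarrow> 'q \<Rightarrow> real" where
  "jp M U Q u q = Pev M (\<lambda>w. U w = u \<and> Q w = q)"

definition Zc :: "'w measure \<Rightarrow> ('w \<Rightarrow> bool) \<Rightarrow> ('w \<Rightarrow> 'q) \<Rightarrow> real" where
  "Zc M U Q = 2 * (\<Sum>q\<in>Q ` space M. sqrt (jp M U Q False q * jp M U Q True q))"

definition Kc :: "'w measure \<Rightarrow> ('w \<Rightarrow> bool) \<Rightarrow> ('w \<Rightarrow> 'q) \<Rightarrow> real" where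
  "Kc M U Q = (\<Sum>q\<in>Q ` space M. \<bar>jp M U Q False q - jp M U Q True q\<bar>)"

definition Hc :: "'w measure \<Rightarrow> ('w \<Rightarrow> bool) \<Rightarrow> ('w \<Rightarrow> 'q) \<Rightarrow> real" where
  "Hc M U Q = (\<Sum>q\<in>Q ` space M. \<Sum>u\<in>(UNIV::bool set).
      (if jp M U Q u q = 0 then 0
       else - jp M U Q u q * log 2 (jp M U Q u q / Pev M (\<lambda>w. Q w = q))))"

text \<open>Matrices over GF(2) as functions from (row, column) indices (0-based) to bool.\<close>
definition G2 :: "nat \<Rightarrow> nat \<Rightarrow> bool" where
  "G2 r c = (c = 0 \<or> r = 1)"   \<comment> \<open>[[1,0],[1,1]]\<close>

text \<open>Kronecker power: G2^{(n+1)} = G2 \<otimes> G2^{n}.\<close>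
fun kron_pow :: "nat \<Rightarrow> nat \<Rightarrow> nat \<Rightarrow> bool" where
  "kron_pow 0 r c = True"
| "kron_pow (Suc n) r c = (G2 (r div 2 ^ n) (c div 2 ^ n) \<and> kron_pow n (r mod 2 ^ n) (c mod 2 ^ n))"

definition bitrev :: "nat \<Rightarrow> nat \<Rightarrow> nat" where
  "bitrev n a = (\<Sum>j<n. if bit a j then 2 ^ (n - 1 - j) else 0)"

definition BN :: "nat \<Rightarrow> nat \<Rightarrow> nat \<Rightarrow> bool" where
  "BN n r c = (c = bitrev n r)"

text \<open>G_N = B_N G_2^{\<otimes>n}, product mod 2.\<close>
definition GN :: "nat \<Rightarrow> nat \<Rightarrow> nat \<Rightarrow> bool" where
  "GN n r c = odd (card {b. b < 2 ^ n \<and> BN n r b \<and> kron_pow n b c})"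

text \<open>Entry c (0-based) of the row vector x G_N, x indexed 0..N-1.\<close>
definition polar_U :: "nat \<Rightarrow> (nat \<Rightarrow> bool) \<Rightarrow> nat \<Rightarrow> bool" where
  "polar_U n x c = odd (card {a. a < 2 ^ n \<and> x a \<and> GN n a c})"

text \<open>U_{c+1} as a random variable (x_a = X_{a+1}); Q_{c+1} = (U_1^{c}, Y_1^N);
  hat version adds (S_N, S_0).\<close>
definition Urv :: "(int \<Rightarrow> 'w \<Rightarrow> bool) \<Rightarrow> nat \<Rightarrow> nat \<Rightarrow> 'w \<Rightarrow> bool" where
  "Urv X n c w = polar_U n (\<lambda>a. X (int a + 1) w) c"

definition Qrv :: "(int \<Rightarrow> 'w \<Rightarrow> bool) \<Rightarrow> (int \<Rightarrow> 'w \<Rightarrow> 'y) \<Rightarrow> nat \<Rightarrow> nat \<Rightarrow> 'w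
    \<Rightarrow> bool list \<times> 'y list" where
  "Qrv X Y n c w = (map (\<lambda>k. Urv X n k w) [0..<c], map (\<lambda>a. Y (int a + 1) w) [0..<2 ^ n])"

definition Qhat :: "(int \<Rightarrow> 'w \<Rightarrow> bool) \<Rightarrow> (int \<Rightarrow> 'w \<Rightarrow> 'y) \<Rightarrow> (int \<Rightarrow> 'w \<Rightarrow> 's)
    \<Rightarrow> nat \<Rightarrow> nat \<Rightarrow> 'w \<Rightarrow> (bool list \<times> 'y list) \<times> 's \<times> 's" where
  "Qhat X Y S n c w = (Qrv X Y n c w, S (2 ^ n) w, S 0 w)"

text \<open>b j = B_{j+1}; i - 1 = sum_{j=1}^n B_j 2^{n-j}.\<close>
definition idx :: "nat \<Rightarrow> (nat \<Rightarrow> bool) \<Rightarrow> nat" where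
  "idx n b = (\<Sum>j<n. if b j then 2 ^ (n - 1 - j) else 0)"

definition coin :: "(nat \<Rightarrow> bool) measure" where
  "coin = PiM UNIV (\<lambda>_::nat. measure_pmf (bernoulli_pmf (1/2)))"

definition Hproc where
  "Hproc M X Y n b = Hc M (Urv X n (idx n b)) (Qrv X Y n (idx n b))"
definition Zproc where
  "Zproc M X Y n b = Zc M (Urv X n (idx n b)) (Qrv X Y n (idx n b))"
definition Kproc where
  "Kproc M X Y n b = Kc M (Urv X n (idx n b)) (Qrv X Y n (idx n b))"
definition Zhat_proc where
  "Zhat_proc M X Y S n b = Zc M (Urv X n (idx n b)) (Qhat X Y S n (idx n b))"
definition Khat_proc where
  "Khat_proc M X Y S n b = Kc M (Urv X n (idx n b)) (Qhat X Y S n (idx n b))"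

definition polarizes :: "'b measure \<Rightarrow> (nat \<Rightarrow> 'b \<Rightarrow> real) \<Rightarrow> ('b \<Rightarrow> real) \<Rightarrow> bool" where
  "polarizes C f L \<longleftrightarrow> L \<in> borel_measurable C \<and>
     (AE b in C. (\<lambda>n. f n b) \<longlonglongrightarrow> L b) \<and> (AE b in C. L b \<in> {0, 1})"

end

theory Submission
  imports Defs
begin


lemma deriv_g: assumes "0 < (x::real)" shows "DERIV (\<lambda>x::real. ln x - 2 * (x - 1) / (x + 1)) x :> (1/x - 4 / (x+1)^2)"
proof -
  have nz: "x + 1 \<noteq> 0" using assms by simp
  have "DERIV (\<lambda>x::real. ln x - 2 * (x - 1) / (x + 1)) x :> (1/x - ((2 * 1) * (x+1) - 2*(x-1) * 1) / ((x+1)*(x+1)))"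
    using assms nz by (intro DERIV_diff DERIV_ln_divide DERIV_divide) (auto intro!: derivative_eq_intros)
  moreover have "((2 * 1) * (x+1) - 2*(x-1) * 1) / ((x+1)*(x+1)) = 4 / (x+1)^2"
    by (simp add: power2_eq_square algebra_simps)
  ultimately show ?thesis by simp
qed

lemma ln_le_frac:
  fixes y :: real assumes "0 < y" "y \<le> 1"
  shows "ln y \<le> 2 * (y - 1) / (y + 1)"
proof -
  let ?g = "\<lambda>x::real. ln x - 2 * (x - 1) / (x + 1)"
  have "?g y \<le> ?g 1"
  proof (rule DERIV_nonneg_imp_nondecreasing[OF assms(2)])
    fix x :: real assume x: "y \<le> x" "x \<le> 1"
    hence xp: "0 < x" using assms by auto
    have "DERIV ?g x :> (1/x - 4 / (x+1)^2)"
      by (rule deriv_g[OF xp])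
    moreover have "0 \<le> 1/x - 4 / (x+1)^2"
    proof -
      have "4 * x \<le> (x+1)^2" using zero_le_power2[of "x - 1"] by (simp add: power2_eq_square algebra_simps)
      hence "4/(x+1)^2 \<le> 4/(4*x)" using xp by (intro divide_left_mono) auto
      thus ?thesis using xp by simp
    qed
    ultimately show "\<exists>d. DERIV ?g x :> d \<and> 0 \<le> d" by blast
  qed
  thus ?thesis by simp
qed

definition hterm :: "real \<Rightarrow> real \<Rightarrow> real" where
  "hterm a b = (if a = 0 then 0 else - a * log 2 (a / (a + b))) + (if b = 0 then 0 else - b * log 2 (b / (a + b)))"

lemma hterm_sym: "hterm a b = hterm b a"
  unfolding hterm_def by (simp add: add.commute)

lemma hterm_ge_aux:
  assumes "0 \<le> a" "a \<le> b"
  shows "a \<le> hterm a b"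
proof (cases "a = 0")
  case True
  then show ?thesis by (cases "b = 0") (simp_all add: hterm_def)
next
  case False
  hence a: "0 < a" using assms by simp
  hence b: "0 < b" using assms by simp
  have "log 2 (a / (a + b)) \<le> log 2 (1/2)"
    using a b assms by (subst log_le_cancel_iff) (auto simp: field_simps)
  also have "log 2 (1/2) = -1" by (simp add: log_divide)
  finally have "a * 1 \<le> a * (- log 2 (a / (a + b)))" using a
    by (intro mult_left_mono) auto
  hence 1: "a \<le> - a * log 2 (a / (a + b))" by simp
  have "log 2 (b / (a + b)) \<le> 0" using a b by (simp add: field_simps)
  hence 2: "0 \<le> - b * log 2 (b / (a + b))" using b
    by (simp add: mult_le_0_iff)
  show ?thesis using 1 2 a b by (simp add: hterm_def)
qed

lemma hterm_ge:
  assumes "0 \<le> a" "0 \<le> b"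
  shows "min a b \<le> hterm a b"
  using hterm_ge_aux[of a b] hterm_ge_aux[of b a] assms hterm_sym[of a b]
  by (cases "a \<le> b") auto

lemma hterm_le_aux:
  assumes "0 \<le> b" "b \<le> a" "0 < a"
  shows "hterm a b \<le> (a + b) - (a - b)^2 / (6 * (a + b))"
proof (cases "b = 0")
  case True
  then show ?thesis using assms by (simp add: hterm_def power2_eq_square)
next
  case False
  hence b: "0 < b" using assms by simp
  define m where "m = a + b"
  have m: "0 < m" using assms unfolding m_def by simp
  have ln2: "0 < ln (2::real)" "ln (2::real) < 1" using ln_2_less_1 by auto
  have A: "- a * ln (a / m) \<le> a * ln 2 + 2 * a * (b - a) / (3 * a + b)"
  proof -
    have y: "0 < m / (2*a)" "m / (2*a) \<le> 1" using assms m unfolding m_def by auto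
    have "ln (m / (2*a)) \<le> 2 * (m/(2*a) - 1) / (m/(2*a) + 1)" by (rule ln_le_frac[OF y])
    also have "\<dots> = 2 * ((b - a) / (2*a)) / ((3 * a + b) / (2*a))"
      using assms unfolding m_def by (simp add: field_simps)
    also have "\<dots> = 2 * (b - a) / (3 * a + b)"
    proof -
      have c: "2*a \<noteq> 0" using assms by simp
      have "\<And>p q. (p/(2*a))/(q/(2*a)) = p/q" using c by simp
      thus ?thesis by (metis times_divide_eq_right)
    qed
    finally have "ln (m / (2*a)) \<le> 2 * (b - a) / (3 * a + b)" .
    moreover have "- ln (a / m) = ln 2 + ln (m / (2*a))"
      using assms m by (simp add: ln_div ln_mult)
    ultimately have "- ln (a / m) \<le> ln 2 + 2 * (b - a) / (3 * a + b)" by simp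
    hence "a * (- ln (a / m)) \<le> a * (ln 2 + 2 * (b - a) / (3 * a + b))"
      using assms by (intro mult_left_mono) auto
    thus ?thesis by (simp add: algebra_simps)
  qed
  have B: "- b * ln (b / m) \<le> b * ln 2 + (a - b) / 2"
  proof -
    have "ln (m / (2*b)) \<le> m / (2*b) - 1" using b m by (intro ln_le_minus_one) auto
    moreover have "- ln (b / m) = ln 2 + ln (m / (2*b))"
      using b m by (simp add: ln_div ln_mult)
    ultimately have "- ln (b / m) \<le> ln 2 + (m / (2*b) - 1)" by simp
    hence "b * (- ln (b / m)) \<le> b * (ln 2 + (m / (2*b) - 1))"
      using b by (intro mult_left_mono) auto
    also have "\<dots> = b * ln 2 + (a - b) / 2" using b unfolding m_def by (simp add: field_simps)
    finally show ?thesis by simp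
  qed
  have C0: "2*a*(b-a)/(3*a+b) + (a-b)/2 = - ((a - b)^2) / (2 * (3 * a + b))"
  proof -
    have nz: "3*a+b \<noteq> 0" using assms by simp
    have "(2*(2*a*(b-a)))/(2*(3*a+b)) = 2*a*(b-a)/(3*a+b)" by (rule mult_divide_mult_cancel_left) simp
    hence h1: "2*a*(b-a)/(3*a+b) = (2*a*(b-a)*2)/(2*(3*a+b))" by (simp add: mult.commute)
    have "((3*a+b)*(a-b))/((3*a+b)*2) = (a-b)/2" by (rule mult_divide_mult_cancel_left) (rule nz)
    hence h2: "(a-b)/2 = ((a-b)*(3*a+b))/(2*(3*a+b))" by (simp add: mult.commute)
    have h3: "(2*a*(b-a)*2) + ((a-b)*(3*a+b)) = - ((a - b)^2)"
      by (simp add: power2_eq_square algebra_simps)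
    have "2*a*(b-a)/(3*a+b) + (a-b)/2 = (2*a*(b-a)*2)/(2*(3*a+b)) + ((a-b)*(3*a+b))/(2*(3*a+b))"
      by (simp only: h1 h2)
    also have "\<dots> = ((2*a*(b-a)*2) + ((a-b)*(3*a+b)))/(2*(3*a+b))" by (rule add_divide_distrib[symmetric])
    also have "\<dots> = - ((a - b)^2) / (2 * (3 * a + b))" by (simp only: h3)
    finally show ?thesis .
  qed
  have C: "a * ln 2 + 2 * a * (b - a) / (3 * a + b) + (b * ln 2 + (a - b) / 2)
      = m * ln 2 - (a - b)^2 / (2 * (3 * a + b))"
    using C0 unfolding m_def by (simp add: algebra_simps)
  have D: "(a - b)^2 / (6 * m) \<le> (a - b)^2 / (2 * (3 * a + b))"
    using assms b unfolding m_def by (intro divide_left_mono) auto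
  have nats: "- a * ln (a / m) - b * ln (b / m) \<le> m * ln 2 - (a - b)^2 / (6 * m)"
    using A B C D by linarith
  have "hterm a b = (- a * ln (a / m) - b * ln (b / m)) / ln 2"
    using assms b unfolding hterm_def m_def log_def by (simp add: field_simps)
  also have "\<dots> \<le> (m * ln 2 - (a - b)^2 / (6 * m)) / ln 2"
    using nats ln2 by (intro divide_right_mono) auto
  also have "\<dots> = m - ((a - b)^2 / (6 * m)) / ln 2" using ln2 by (simp add: field_simps)
  also have "\<dots> \<le> m - (a - b)^2 / (6 * m)"
  proof -
    have "(a - b)^2 / (6 * m) * ln 2 \<le> (a - b)^2 / (6 * m) * 1"
      using ln2 m by (intro mult_left_mono) auto
    hence "(a - b)^2 / (6 * m) \<le> ((a - b)^2 / (6 * m)) / ln 2"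
      by (subst pos_le_divide_eq[OF ln2(1)]) (simp only:)
    thus ?thesis by simp
  qed
  finally show ?thesis unfolding m_def .
qed

lemma hterm_le:
  assumes "0 \<le> a" "0 \<le> b"
  shows "hterm a b \<le> (a + b) - (a - b)^2 / (6 * (a + b))"
proof (cases "a = 0 \<and> b = 0")
  case True then show ?thesis by (simp add: hterm_def)
next
  case False
  show ?thesis
  proof (cases "b \<le> a")
    case True then show ?thesis using hterm_le_aux[of b a] assms False by auto
  next
    case nb: False
    have "hterm b a \<le> (b + a) - (b - a)^2 / (6 * (b + a))"
      using hterm_le_aux[of a b] assms nb by auto
    thus ?thesis by (simp add: hterm_sym add.commute power2_commute)
  qed
qed

lemma zk_z_upper:
  fixes a b e :: real assumes "0 \<le> a" "0 \<le> b" "0 < e"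
  shows "2 * sqrt (a * b) \<le> e * (a + b) + min a b / e"
proof -
  define c where "c = min a b"
  define d where "d = a + b"
  have c0: "0 \<le> c" "0 \<le> d" using assms unfolding c_def d_def by auto
  have ab: "a * b \<le> c * d" using assms unfolding c_def d_def
    by (cases "a \<le> b") (auto simp: algebra_simps intro: mult_left_mono mult_right_mono)
  have sq: "(e*d + c/e)^2 = (e*d - c/e)^2 + 4*((e*d)*(c/e))" by (simp add: power2_eq_square algebra_simps)
  have cd: "(e*d)*(c/e) = c*d" using assms by simp
  have "4 * (a * b) \<le> (e*d + c/e)^2"
    using sq cd ab zero_le_power2[of "e*d - c/e"] by linarith
  hence "sqrt (4 * (a * b)) \<le> sqrt ((e*d + c/e)^2)" by (rule real_sqrt_le_mono)
  also have "\<dots> = e*d + c/e" using c0 assms by simp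
  finally have "sqrt 4 * sqrt (a * b) \<le> e*d + c/e" by (simp add: real_sqrt_mult)
  moreover have "sqrt (4::real) = 2" by (simp add: real_sqrt_eq_iff)
  ultimately show ?thesis unfolding c_def d_def by simp
qed

lemma zk_min:
  fixes a b :: real assumes "0 \<le> a" "0 \<le> b"
  shows "min a b \<le> sqrt (a * b)"
proof (rule real_le_rsqrt)
  show "(min a b)^2 \<le> a * b" using assms
    by (cases "a \<le> b") (auto simp: power2_eq_square intro: mult_left_mono mult_right_mono)
qed

lemma zk_am:
  fixes a b :: real assumes "0 \<le> a" "0 \<le> b"
  shows "2 * sqrt (a * b) \<le> a + b"
  using arith_geo_mean_sqrt[OF assms] by simp

lemma zk_k:
  fixes a b e :: real assumes "0 \<le> a" "0 \<le> b" "0 < e"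
  shows "\<bar>a - b\<bar> \<le> e * (a + b) + (a - b)^2 / (a + b) / e"
proof (cases "a + b = 0")
  case True then show ?thesis using assms by simp
next
  case False
  define m where "m = a + b"
  define t where "t = \<bar>a - b\<bar>"
  have m: "0 < m" using False assms unfolding m_def by simp
  have t: "0 \<le> t" "t \<le> m" using assms unfolding t_def m_def by auto
  have eq: "(a - b)^2 / (a + b) / e = t * (t / (m * e))" unfolding t_def m_def
    by (simp add: power2_eq_square)
  show ?thesis
  proof (cases "t \<le> e * m")
    case True
    have "0 \<le> t * (t / (m * e))" using t m assms by simp
    then show ?thesis using True eq unfolding t_def m_def by linarith
  next
    case False
    hence "1 \<le> t / (m * e)" using m assms by (simp add: field_simps)
    hence A: "t * 1 \<le> t * (t / (m * e))" using t by (intro mult_left_mono) auto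
    have "t \<le> (a - b)^2 / (a + b) / e" using A by (subst eq) simp
    moreover have "0 \<le> e * (a + b)" using m assms unfolding m_def by simp
    ultimately show ?thesis unfolding t_def by linarith
  qed
qed

definition zkh :: "real \<Rightarrow> real \<Rightarrow> real \<Rightarrow> bool" where
  "zkh z k h \<longleftrightarrow> 0 \<le> z \<and> z \<le> 1 \<and> 0 \<le> k \<and> k \<le> 1 \<and> 1 - k \<le> z \<and> 1 - 2 * h \<le> k \<and>
     (\<forall>e>0. z \<le> e + h / e \<and> k \<le> e + 6 * (1 - h) / e)"

lemma zkh_sum:
  fixes a b :: "'v \<Rightarrow> real"
  assumes fin: "finite V" and nn: "\<And>v. v \<in> V \<Longrightarrow> 0 \<le> a v" "\<And>v. v \<in> V \<Longrightarrow> 0 \<le> b v"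
    and tot: "(\<Sum>v\<in>V. a v + b v) = 1"
  shows "zkh (2 * (\<Sum>v\<in>V. sqrt (a v * b v))) (\<Sum>v\<in>V. \<bar>a v - b v\<bar>) (\<Sum>v\<in>V. hterm (a v) (b v))"
proof -
  let ?Z = "2 * (\<Sum>v\<in>V. sqrt (a v * b v))"
  let ?K = "\<Sum>v\<in>V. \<bar>a v - b v\<bar>"
  let ?H = "\<Sum>v\<in>V. hterm (a v) (b v)"
  have Z: "?Z = (\<Sum>v\<in>V. 2 * sqrt (a v * b v))" by (simp add: sum_distrib_left)
  have m2: "\<And>v. v \<in> V \<Longrightarrow> a v + b v - \<bar>a v - b v\<bar> = 2 * min (a v) (b v)"
    by auto
  have oneK: "1 - ?K = (\<Sum>v\<in>V. 2 * min (a v) (b v))"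
  proof -
    have "1 - ?K = (\<Sum>v\<in>V. a v + b v) - ?K" using tot by simp
    also have "\<dots> = (\<Sum>v\<in>V. a v + b v - \<bar>a v - b v\<bar>)" by (simp add: sum_subtractf)
    also have "\<dots> = (\<Sum>v\<in>V. 2 * min (a v) (b v))" by (rule sum.cong) (auto simp: m2)
    finally show ?thesis .
  qed
  have z0: "0 \<le> ?Z" using nn by (auto intro!: sum_nonneg)
  have z1: "?Z \<le> 1" unfolding Z tot[symmetric] using nn by (intro sum_mono zk_am) auto
  have k0: "0 \<le> ?K" by (auto intro!: sum_nonneg)
  have ab: "\<bar>a v - b v\<bar> \<le> a v + b v" if "v \<in> V" for v
    using nn(1)[OF that] nn(2)[OF that] by (simp add: abs_le_iff)
  have k1: "?K \<le> 1" unfolding tot[symmetric] using ab by (intro sum_mono) auto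
  have kz: "1 - ?K \<le> ?Z" unfolding oneK Z using nn
    by (intro sum_mono) (auto intro: zk_min[of "a _" "b _", simplified])
  have hk: "1 - 2 * ?H \<le> ?K"
  proof -
    have "(\<Sum>v\<in>V. 2 * min (a v) (b v)) \<le> (\<Sum>v\<in>V. 2 * hterm (a v) (b v))"
      using nn hterm_ge by (intro sum_mono) auto
    thus ?thesis using oneK by (simp add: sum_distrib_left)
  qed
  have eps: "?Z \<le> e + ?H / e \<and> ?K \<le> e + 6 * (1 - ?H) / e" if e: "0 < e" for e
  proof
    have "?Z \<le> (\<Sum>v\<in>V. e * (a v + b v) + min (a v) (b v) / e)"
      unfolding Z using nn e by (intro sum_mono zk_z_upper) auto
    also have "\<dots> = e + (\<Sum>v\<in>V. min (a v) (b v)) / e"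
      using tot by (simp add: sum.distrib sum_distrib_left[symmetric] sum_divide_distrib[symmetric])
    also have "\<dots> \<le> e + ?H / e"
      using e nn hterm_ge by (auto intro!: divide_right_mono sum_mono)
    finally show "?Z \<le> e + ?H / e" .
    have "?K \<le> (\<Sum>v\<in>V. e * (a v + b v) + (a v - b v)^2 / (a v + b v) / e)"
      using nn e by (intro sum_mono zk_k) auto
    also have "\<dots> = e + (\<Sum>v\<in>V. (a v - b v)^2 / (a v + b v)) / e"
      using tot by (simp add: sum.distrib sum_distrib_left[symmetric] sum_divide_distrib[symmetric] del: divide_divide_eq_left)
    also have "\<dots> \<le> e + 6 * (1 - ?H) / e"
    proof -
      have "(\<Sum>v\<in>V. (a v - b v)^2 / (a v + b v)) \<le> (\<Sum>v\<in>V. 6 * ((a v + b v) - hterm (a v) (b v)))"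
      proof (intro sum_mono)
        fix v assume v: "v \<in> V"
        have "hterm (a v) (b v) \<le> (a v + b v) - (a v - b v)^2 / (6 * (a v + b v))"
          using hterm_le nn v by auto
        moreover have "(a v - b v)^2 / (6 * (a v + b v)) = ((a v - b v)^2 / (a v + b v)) / 6" by simp
        moreover have "\<And>q h m::real. h \<le> m - q / 6 \<Longrightarrow> q \<le> 6 * (m - h)" by (auto simp: field_simps)
        ultimately show "(a v - b v)^2 / (a v + b v) \<le> 6 * ((a v + b v) - hterm (a v) (b v))" by metis
      qed
      also have "\<dots> = 6 * ((\<Sum>v\<in>V. a v + b v) - ?H)" by (simp only: sum_distrib_left[symmetric] sum_subtractf)
      also have "\<dots> = 6 * (1 - ?H)" using tot by simp
      finally show ?thesis using e by (simp add: divide_right_mono)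
    qed
    finally show "?K \<le> e + 6 * (1 - ?H) / e" .
  qed
  show ?thesis unfolding zkh_def using z0 z1 k0 k1 kz hk eps by blast
qed

lemma lim_eps:
  fixes z g :: "nat \<Rightarrow> real"
  assumes z0: "\<And>n. 0 \<le> z n" and b: "\<And>e n. 0 < e \<Longrightarrow> z n \<le> e + g n / e"
    and g: "g \<longlonglongrightarrow> 0"
  shows "z \<longlonglongrightarrow> 0"
proof (rule LIMSEQ_I)
  fix r :: real assume r: "0 < r"
  have "0 < r * r / 4" using r by simp
  from LIMSEQ_D[OF g this] obtain no where no: "\<And>n. n \<ge> no \<Longrightarrow> norm (g n - 0) < r * r / 4" by blast
  show "\<exists>no. \<forall>n\<ge>no. norm (z n - 0) < r"
  proof (intro exI allI impI)
    fix n assume "no \<le> n"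
    hence gn: "g n < r * r / 4" using no by force
    have "g n / (r/2) < (r * r / 4) / (r/2)" using gn r by (intro divide_strict_right_mono) auto
    also have "\<dots> = r / 2" using r by (simp add: field_simps)
    finally have "z n < r" using b[of "r/2" n] r by simp
    thus "norm (z n - 0) < r" using z0[of n] by simp
  qed
qed

lemma zkh_lim:
  assumes zk: "\<And>n. zkh (z n) (k n) (h n)" and h: "h \<longlonglongrightarrow> L" and L: "L = 0 \<or> L = 1"
  shows "z \<longlonglongrightarrow> L \<and> k \<longlonglongrightarrow> 1 - L"
  using L
proof
  assume L0: "L = 0"
  have "z \<longlonglongrightarrow> 0" using zk h L0 by (intro lim_eps[of z h]) (auto simp: zkh_def)
  moreover have "k \<longlonglongrightarrow> 1"
  proof (rule tendsto_sandwich[of "\<lambda>n. 1 - 2 * h n" k sequentially "\<lambda>n. 1"])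
    show "\<forall>\<^sub>F n in sequentially. 1 - 2 * h n \<le> k n" using zk by (simp add: zkh_def)
    show "\<forall>\<^sub>F n in sequentially. k n \<le> 1" using zk by (simp add: zkh_def)
    show "(\<lambda>n. 1 - 2 * h n) \<longlonglongrightarrow> 1" using h L0 by (auto intro!: tendsto_eq_intros)
  qed simp
  ultimately show ?thesis using L0 by simp
next
  assume L1: "L = 1"
  have g: "(\<lambda>n. 6 * (1 - h n)) \<longlonglongrightarrow> 0" using h L1 by (auto intro!: tendsto_eq_intros)
  have k: "k \<longlonglongrightarrow> 0" using zk by (intro lim_eps[OF _ _ g]) (auto simp: zkh_def)
  moreover have "z \<longlonglongrightarrow> 1"
  proof (rule tendsto_sandwich[of "\<lambda>n. 1 - k n" z sequentially "\<lambda>n. 1"])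
    show "\<forall>\<^sub>F n in sequentially. 1 - k n \<le> z n" using zk by (simp add: zkh_def)
    show "\<forall>\<^sub>F n in sequentially. z n \<le> 1" using zk by (simp add: zkh_def)
    show "(\<lambda>n. 1 - k n) \<longlonglongrightarrow> 1" using k by (auto intro!: tendsto_eq_intros)
  qed simp
  ultimately show ?thesis using L1 by simp
qed




definition prw :: "'r set \<Rightarrow> ('r \<Rightarrow> real) \<Rightarrow> ('r \<Rightarrow> 'v) \<Rightarrow> 'v \<Rightarrow> real" where
  "prw R p f v = (\<Sum>r\<in>R. if f r = v then p r else 0)"

definition ent :: "'r set \<Rightarrow> ('r \<Rightarrow> real) \<Rightarrow> ('r \<Rightarrow> 'v) \<Rightarrow> real" where
  "ent R p f = (\<Sum>v\<in>f ` R. - prw R p f v * log 2 (prw R p f v))"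

lemma gibbs:
  fixes a b :: "'i \<Rightarrow> real"
  assumes fin: "finite I" and a0: "\<And>i. i \<in> I \<Longrightarrow> 0 \<le> a i"
    and bp: "\<And>i. i \<in> I \<Longrightarrow> 0 < a i \<Longrightarrow> 0 < b i"
    and s: "(\<Sum>i\<in>I. if 0 < a i then b i else 0) \<le> (\<Sum>i\<in>I. a i)"
  shows "(\<Sum>i\<in>I. a i * (log 2 (b i) - log 2 (a i))) \<le> 0"
proof -
  have ln2: "0 < ln (2::real)" by simp
  have t: "a i * (log 2 (b i) - log 2 (a i)) \<le> ((if 0 < a i then b i else 0) - a i) / ln 2"
    if i: "i \<in> I" for i
  proof (cases "0 < a i")
    case False
    then have "a i = 0" using a0[OF i] by simp
    then show ?thesis by simp
  next
    case True
    have b: "0 < b i" using bp[OF i True] .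
    have "log 2 (b i) - log 2 (a i) = ln (b i / a i) / ln 2"
      using True b by (simp add: log_def ln_div diff_divide_distrib)
    also have "\<dots> \<le> (b i / a i - 1) / ln 2"
      using True b ln2 by (intro divide_right_mono ln_le_minus_one) auto
    finally have "a i * (log 2 (b i) - log 2 (a i)) \<le> a i * ((b i / a i - 1) / ln 2)"
      using True by (intro mult_left_mono) auto
    also have "\<dots> = (b i - a i) / ln 2" using True by (simp add: field_simps)
    finally show ?thesis using True by simp
  qed
  have "(\<Sum>i\<in>I. a i * (log 2 (b i) - log 2 (a i))) \<le> (\<Sum>i\<in>I. ((if 0 < a i then b i else 0) - a i) / ln 2)"
    using t by (rule sum_mono)
  also have "\<dots> = ((\<Sum>i\<in>I. if 0 < a i then b i else 0) - (\<Sum>i\<in>I. a i)) / ln 2"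
    by (simp add: sum_divide_distrib[symmetric] sum_subtractf)
  also have "\<dots> \<le> 0" using s ln2 by (simp add: divide_nonpos_pos)
  finally show ?thesis .
qed

locale wset =
  fixes R :: "'r set" and p :: "'r \<Rightarrow> real"
  assumes fin: "finite R" and nn: "\<And>r. r \<in> R \<Longrightarrow> 0 \<le> p r" and tot: "sum p R = 1"
begin

lemma prw_nn: "0 \<le> prw R p f v"
  unfolding prw_def using nn by (auto intro!: sum_nonneg)

lemma prw_out: "v \<notin> f ` R \<Longrightarrow> prw R p f v = 0"
  unfolding prw_def by (auto intro!: sum.neutral)

lemma prw_comp:
  assumes "finite V" "f ` R \<subseteq> V"
  shows "prw R p (\<lambda>r. g (f r)) w = (\<Sum>v\<in>V. if g v = w then prw R p f v else 0)"
proof -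
  have "(\<Sum>v\<in>V. if g v = w then prw R p f v else 0)
      = (\<Sum>v\<in>V. \<Sum>r\<in>R. if v = f r then (if g (f r) = w then p r else 0) else 0)"
  proof (intro sum.cong refl)
    fix v assume "v \<in> V"
    show "(if g v = w then prw R p f v else 0) = (\<Sum>r\<in>R. if v = f r then (if g (f r) = w then p r else 0) else 0)"
      unfolding prw_def by (cases "g v = w") (auto intro: sum.cong sum.neutral)
  qed
  also have "\<dots> = (\<Sum>r\<in>R. \<Sum>v\<in>V. if v = f r then (if g (f r) = w then p r else 0) else 0)"
    by (rule sum.swap)
  also have "\<dots> = (\<Sum>r\<in>R. if g (f r) = w then p r else 0)"
    using assms by (intro sum.cong refl) (auto simp: sum.delta')
  finally show ?thesis unfolding prw_def by simp
qed

lemma prw_le: "prw R p f v \<le> prw R p (\<lambda>r. g (f r)) (g v)"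
  unfolding prw_def using nn by (intro sum_mono) auto

lemma prw_marg:
  assumes "finite B" "t ` R \<subseteq> B"
  shows "(\<Sum>z\<in>B. prw R p (\<lambda>r. (q r, t r)) (y, z)) = prw R p q y"
proof -
  have "(\<Sum>z\<in>B. prw R p (\<lambda>r. (q r, t r)) (y, z))
      = (\<Sum>z\<in>B. \<Sum>r\<in>R. if z = t r then (if q r = y then p r else 0) else 0)"
    unfolding prw_def by (intro sum.cong refl) auto
  also have "\<dots> = (\<Sum>r\<in>R. \<Sum>z\<in>B. if z = t r then (if q r = y then p r else 0) else 0)"
    by (rule sum.swap)
  also have "\<dots> = prw R p q y"
    unfolding prw_def using assms by (intro sum.cong refl) (auto simp: sum.delta')
  finally show ?thesis .
qed

lemma prw_total:
  assumes "finite V" "f ` R \<subseteq> V"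
  shows "(\<Sum>v\<in>V. prw R p f v) = 1"
proof -
  have "(\<Sum>v\<in>V. prw R p f v) = (\<Sum>v\<in>V. \<Sum>r\<in>R. if v = f r then p r else 0)"
    unfolding prw_def by (intro sum.cong refl) auto
  also have "\<dots> = (\<Sum>r\<in>R. \<Sum>v\<in>V. if v = f r then p r else 0)" by (rule sum.swap)
  also have "\<dots> = (\<Sum>r\<in>R. p r)" using assms by (intro sum.cong refl) (auto simp: sum.delta')
  finally show ?thesis using tot by simp
qed

lemma ent_super:
  assumes "finite V" "f ` R \<subseteq> V"
  shows "ent R p f = (\<Sum>v\<in>V. - prw R p f v * log 2 (prw R p f v))"
  unfolding ent_def using assms by (intro sum.mono_neutral_left) (auto simp: prw_out)

lemma ent_coarse:
  assumes V: "finite V" "f ` R \<subseteq> V"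
  shows "ent R p (\<lambda>r. g (f r)) = (\<Sum>v\<in>V. - prw R p f v * log 2 (prw R p (\<lambda>r. g (f r)) (g v)))"
proof -
  let ?G = "\<lambda>r. g (f r)"
  have "(\<Sum>v\<in>V. - prw R p f v * log 2 (prw R p ?G (g v)))
      = (\<Sum>w\<in>g ` V. \<Sum>v\<in>{v\<in>V. g v = w}. - prw R p f v * log 2 (prw R p ?G (g v)))"
    by (rule sum.image_gen[OF V(1), of _ g])
  also have "\<dots> = (\<Sum>w\<in>g ` V. - (\<Sum>v\<in>{v\<in>V. g v = w}. prw R p f v) * log 2 (prw R p ?G w))"
    by (intro sum.cong refl) (simp add: sum_distrib_right sum_negf)
  also have "\<dots> = (\<Sum>w\<in>g ` V. - prw R p ?G w * log 2 (prw R p ?G w))"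
    using V by (intro sum.cong refl) (simp add: sum.inter_filter prw_comp[OF V])
  also have "\<dots> = ent R p ?G"
    using V by (intro ent_super[symmetric]) auto
  finally show ?thesis by simp
qed

lemma ent_inj:
  assumes "inj_on g (f ` R)"
  shows "ent R p (\<lambda>r. g (f r)) = ent R p f"
proof -
  have e: "prw R p (\<lambda>r. g (f r)) (g v) = prw R p f v" if "v \<in> f ` R" for v
    unfolding prw_def using assms that by (intro sum.cong refl) (auto simp: inj_on_def)
  have "ent R p (\<lambda>r. g (f r)) = (\<Sum>v\<in>f ` R. - prw R p f v * log 2 (prw R p (\<lambda>r. g (f r)) (g v)))"
    using fin by (intro ent_coarse) auto
  also have "\<dots> = ent R p f" unfolding ent_def by (intro sum.cong refl) (simp add: e)
  finally show ?thesis .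
qed

lemma R_ne: "R \<noteq> {}" using tot by auto

lemma cond_ent_bounds:
  fixes q :: "'r \<Rightarrow> 'a" and t :: "'r \<Rightarrow> 'b"
  shows "0 \<le> ent R p (\<lambda>r. (q r, t r)) - ent R p q"
    and "ent R p (\<lambda>r. (q r, t r)) - ent R p q \<le> log 2 (card (t ` R))"
proof -
  let ?f = "\<lambda>r. (q r, t r)"
  define A where "A = q ` R"
  define B where "B = t ` R"
  define V where "V = A \<times> B"
  have V: "finite V" "?f ` R \<subseteq> V" unfolding V_def A_def B_def using fin by auto
  have qf: "(\<lambda>r. fst (?f r)) = q" by simp
  have e1: "ent R p ?f = (\<Sum>v\<in>V. - prw R p ?f v * log 2 (prw R p ?f v))" by (rule ent_super[OF V])
  have e2: "ent R p q = (\<Sum>v\<in>V. - prw R p ?f v * log 2 (prw R p q (fst v)))"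
    using ent_coarse[OF V, of fst] by (simp only: qf)
  have le: "prw R p ?f v \<le> prw R p q (fst v)" for v
    using prw_le[of ?f v fst] by (simp only: qf)
  have diff: "ent R p ?f - ent R p q = (\<Sum>v\<in>V. prw R p ?f v * (log 2 (prw R p q (fst v)) - log 2 (prw R p ?f v)))"
    unfolding e1 e2 by (simp add: sum_subtractf[symmetric] algebra_simps)
  show "0 \<le> ent R p ?f - ent R p q"
    unfolding diff
  proof (intro sum_nonneg)
    fix v assume "v \<in> V"
    show "0 \<le> prw R p ?f v * (log 2 (prw R p q (fst v)) - log 2 (prw R p ?f v))"
    proof (cases "prw R p ?f v = 0")
      case False
      hence pos: "0 < prw R p ?f v" using prw_nn[of ?f v] by simp
      have "log 2 (prw R p ?f v) \<le> log 2 (prw R p q (fst v))"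
        using pos le[of v] by simp
      thus ?thesis using pos by simp
    qed simp
  qed
  have Bfin: "finite B" unfolding B_def using fin by simp
  have kpos: "0 < card B" unfolding B_def using fin R_ne by (simp add: card_gt_0_iff)
  define k where "k = real (card B)"
  have k: "0 < k" unfolding k_def using kpos by simp
  define b where "b v = prw R p q (fst v) / k" for v :: "'a \<times> 'b"
  have g: "(\<Sum>v\<in>V. prw R p ?f v * (log 2 (b v) - log 2 (prw R p ?f v))) \<le> 0"
  proof (rule gibbs[OF V(1)])
    show "0 \<le> prw R p ?f v" for v by (rule prw_nn)
    show "0 < b v" if "v \<in> V" "0 < prw R p ?f v" for v
      using that le[of v] k unfolding b_def by simp
    have "(\<Sum>v\<in>V. if 0 < prw R p ?f v then b v else 0) \<le> (\<Sum>v\<in>V. b v)"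
      using k unfolding b_def by (intro sum_mono) (auto intro!: divide_nonneg_pos prw_nn)
    also have "\<dots> = (\<Sum>x\<in>A. \<Sum>y\<in>B. prw R p q x / k)"
    proof -
      have "(\<Sum>x\<in>A. \<Sum>y\<in>B. prw R p q x / k) = (\<Sum>(x,y)\<in>A \<times> B. prw R p q x / k)"
        by (rule sum.cartesian_product)
      thus ?thesis unfolding V_def b_def by (simp add: case_prod_beta)
    qed
    also have "\<dots> = (\<Sum>x\<in>A. prw R p q x)" using k unfolding k_def by simp
    also have "\<dots> = 1" using fin unfolding A_def by (intro prw_total) auto
    also have "\<dots> = (\<Sum>v\<in>V. prw R p ?f v)" using V by (intro prw_total[symmetric])
    finally show "(\<Sum>v\<in>V. if 0 < prw R p ?f v then b v else 0) \<le> (\<Sum>v\<in>V. prw R p ?f v)" .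
  qed
  have t: "prw R p ?f v * (log 2 (prw R p q (fst v)) - log 2 (prw R p ?f v))
      = prw R p ?f v * (log 2 (b v) - log 2 (prw R p ?f v)) + prw R p ?f v * log 2 k" for v
  proof (cases "prw R p ?f v = 0")
    case False
    hence pos: "0 < prw R p ?f v" using prw_nn[of ?f v] by simp
    hence "0 < prw R p q (fst v)" using le[of v] by simp
    hence "log 2 (b v) = log 2 (prw R p q (fst v)) - log 2 k" unfolding b_def using k
      by (simp add: log_divide)
    thus ?thesis by (simp add: right_diff_distrib distrib_left)
  qed simp
  have "ent R p ?f - ent R p q = (\<Sum>v\<in>V. prw R p ?f v * (log 2 (b v) - log 2 (prw R p ?f v))) + (\<Sum>v\<in>V. prw R p ?f v) * log 2 k"
    unfolding diff t by (simp add: sum.distrib sum_distrib_right)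
  also have "\<dots> \<le> log 2 k" using g prw_total[OF V] by simp
  finally show "ent R p ?f - ent R p q \<le> log 2 (card (t ` R))" unfolding k_def B_def .
qed

lemma sum3:
  "(\<Sum>v\<in>X \<times> (A \<times> B). F (fst v) (fst (snd v)) (snd (snd v))) = (\<Sum>x\<in>X. \<Sum>y\<in>A. \<Sum>z\<in>B. F x y z)"
  by (simp add: sum.cartesian_product case_prod_beta)

lemma sum2:
  "(\<Sum>v\<in>X \<times> A. F (fst v) (snd v)) = (\<Sum>x\<in>X. \<Sum>y\<in>A. F x y)"
  by (simp add: sum.cartesian_product case_prod_beta)

lemma cond_reduces:
  fixes u :: "'r \<Rightarrow> 'x" and q :: "'r \<Rightarrow> 'a" and t :: "'r \<Rightarrow> 'b"
  shows "ent R p (\<lambda>r. (u r, (q r, t r))) - ent R p (\<lambda>r. (q r, t r))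
         \<le> ent R p (\<lambda>r. (u r, q r)) - ent R p q"
proof -
  let ?f = "\<lambda>r. (u r, (q r, t r))"
  define X where "X = u ` R"
  define A where "A = q ` R"
  define B where "B = t ` R"
  define V where "V = X \<times> (A \<times> B)"
  have fins: "finite X" "finite A" "finite B" unfolding X_def A_def B_def using fin by auto
  have V: "finite V" "?f ` R \<subseteq> V" unfolding V_def X_def A_def B_def using fin by auto
  define a where "a v = prw R p ?f v" for v
  define P1 where "P1 v = prw R p (\<lambda>r. (u r, q r)) (fst v, fst (snd v))" for v :: "'x \<times> 'a \<times> 'b"
  define P2 where "P2 v = prw R p (\<lambda>r. (q r, t r)) (snd v)" for v :: "'x \<times> 'a \<times> 'b"
  define P3 where "P3 v = prw R p q (fst (snd v))" for v :: "'x \<times> 'a \<times> 'b"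
  have E0: "ent R p ?f = (\<Sum>v\<in>V. - a v * log 2 (a v))" unfolding a_def by (rule ent_super[OF V])
  have E1: "ent R p (\<lambda>r. (u r, q r)) = (\<Sum>v\<in>V. - a v * log 2 (P1 v))"
    using ent_coarse[OF V, of "\<lambda>v. (fst v, fst (snd v))"] unfolding a_def P1_def by simp
  have E2: "ent R p (\<lambda>r. (q r, t r)) = (\<Sum>v\<in>V. - a v * log 2 (P2 v))"
    using ent_coarse[OF V, of snd] unfolding a_def P2_def by simp
  have E3: "ent R p q = (\<Sum>v\<in>V. - a v * log 2 (P3 v))"
    using ent_coarse[OF V, of "\<lambda>v. fst (snd v)"] unfolding a_def P3_def by simp
  have a0: "0 \<le> a v" for v unfolding a_def by (rule prw_nn)
  have L1: "a v \<le> P1 v" for v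
    using prw_le[of ?f v "\<lambda>v. (fst v, fst (snd v))"] unfolding a_def P1_def by simp
  have L2: "a v \<le> P2 v" for v
    using prw_le[of ?f v snd] unfolding a_def P2_def by simp
  have L3: "a v \<le> P3 v" for v
    using prw_le[of ?f v "\<lambda>v. fst (snd v)"] unfolding a_def P3_def by simp
  define b where "b v = P1 v * P2 v / P3 v" for v
  have key: "- a v * log 2 (a v) - (- a v * log 2 (P2 v)) - ((- a v * log 2 (P1 v)) - (- a v * log 2 (P3 v)))
      = a v * (log 2 (b v) - log 2 (a v))" for v
  proof (cases "a v = 0")
    case False
    hence pos: "0 < a v" using a0[of v] by simp
    have "0 < P1 v" "0 < P2 v" "0 < P3 v" using pos L1[of v] L2[of v] L3[of v] by auto
    hence lb: "log 2 (b v) = log 2 (P1 v) + log 2 (P2 v) - log 2 (P3 v)"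
      unfolding b_def by (simp add: log_mult log_divide)
    show ?thesis unfolding lb by (simp add: algebra_simps)
  qed simp
  have G: "(\<Sum>v\<in>V. a v * (log 2 (b v) - log 2 (a v))) \<le> 0"
  proof (rule gibbs[OF V(1)])
    show "0 \<le> a v" for v by (rule a0)
    show "0 < b v" if "v \<in> V" "0 < a v" for v
      using that L1[of v] L2[of v] L3[of v] unfolding b_def by simp
    have P0: "0 \<le> P1 v" "0 \<le> P2 v" "0 \<le> P3 v" for v
      unfolding P1_def P2_def P3_def by (simp_all add: prw_nn)
    have "(\<Sum>v\<in>V. if 0 < a v then b v else 0) \<le> (\<Sum>v\<in>V. b v)"
      using P0 unfolding b_def by (intro sum_mono) auto
    also have "\<dots> = (\<Sum>x\<in>X. \<Sum>y\<in>A. \<Sum>z\<in>B. prw R p (\<lambda>r. (u r, q r)) (x, y) * prw R p (\<lambda>r. (q r, t r)) (y, z) / prw R p q y)"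
      unfolding V_def b_def P1_def P2_def P3_def
      using sum3[of "\<lambda>x y z. prw R p (\<lambda>r. (u r, q r)) (x, y) * prw R p (\<lambda>r. (q r, t r)) (y, z) / prw R p q y" X A B]
      by simp
    also have "\<dots> = (\<Sum>x\<in>X. \<Sum>y\<in>A. prw R p (\<lambda>r. (u r, q r)) (x, y) / prw R p q y * (\<Sum>z\<in>B. prw R p (\<lambda>r. (q r, t r)) (y, z)))"
      by (simp add: sum_distrib_left)
    also have "\<dots> = (\<Sum>x\<in>X. \<Sum>y\<in>A. prw R p (\<lambda>r. (u r, q r)) (x, y) / prw R p q y * prw R p q y)"
      using fins B_def by (simp add: prw_marg)
    also have "\<dots> \<le> (\<Sum>x\<in>X. \<Sum>y\<in>A. prw R p (\<lambda>r. (u r, q r)) (x, y))"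
      by (intro sum_mono) (simp add: prw_nn)
    also have "\<dots> = (\<Sum>v\<in>X \<times> A. prw R p (\<lambda>r. (u r, q r)) v)"
      using sum2[of "\<lambda>x y. prw R p (\<lambda>r. (u r, q r)) (x, y)" X A] by simp
    also have "\<dots> = 1" using fins fin unfolding X_def A_def by (intro prw_total) auto
    also have "\<dots> = (\<Sum>v\<in>V. a v)" unfolding a_def using V by (intro prw_total[symmetric])
    finally show "(\<Sum>v\<in>V. if 0 < a v then b v else 0) \<le> (\<Sum>v\<in>V. a v)" .
  qed
  have "(ent R p ?f - ent R p (\<lambda>r. (q r, t r))) - (ent R p (\<lambda>r. (u r, q r)) - ent R p q)
      = (\<Sum>v\<in>V. a v * (log 2 (b v) - log 2 (a v)))"
    unfolding E0 E1 E2 E3 key[symmetric] by (simp add: sum_subtractf sum_negf)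
  thus ?thesis using G by simp
qed

lemma prw_bool:
  "prw R p (\<lambda>r. (u r, q r)) (False, v) + prw R p (\<lambda>r. (u r, q r)) (True, v) = prw R p q v"
  unfolding prw_def sum.distrib[symmetric] by (intro sum.cong refl) auto

lemma hc_ent:
  fixes u :: "'r \<Rightarrow> bool" and q :: "'r \<Rightarrow> 'a"
  shows "(\<Sum>v\<in>q ` R. \<Sum>x\<in>UNIV. if prw R p (\<lambda>r. (u r, q r)) (x, v) = 0 then 0
            else - prw R p (\<lambda>r. (u r, q r)) (x, v) * log 2 (prw R p (\<lambda>r. (u r, q r)) (x, v) / prw R p q v))
         = ent R p (\<lambda>r. (u r, q r)) - ent R p q"
proof -
  let ?J = "prw R p (\<lambda>r. (u r, q r))"
  define V where "V = (UNIV :: bool set) \<times> q ` R"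
  have V: "finite V" "(\<lambda>r. (u r, q r)) ` R \<subseteq> V" unfolding V_def using fin by auto
  have le: "?J (x, v) \<le> prw R p q v" for x v
    using prw_le[of "\<lambda>r. (u r, q r)" "(x, v)" snd] by simp
  have t: "(if ?J (x, v) = 0 then 0 else - ?J (x, v) * log 2 (?J (x, v) / prw R p q v))
      = - ?J (x, v) * log 2 (?J (x, v)) - (- ?J (x, v) * log 2 (prw R p q v))" for x v
  proof (cases "?J (x, v) = 0")
    case False
    hence pos: "0 < ?J (x, v)" using prw_nn[of "\<lambda>r. (u r, q r)" "(x, v)"] by simp
    hence "0 < prw R p q v" using le[of x v] by simp
    thus ?thesis using pos False by (simp add: log_divide algebra_simps)
  qed simp
  have E1: "ent R p (\<lambda>r. (u r, q r)) = (\<Sum>v\<in>V. - ?J v * log 2 (?J v))" by (rule ent_super[OF V])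
  have E2: "ent R p q = (\<Sum>v\<in>V. - ?J v * log 2 (prw R p q (snd v)))"
    using ent_coarse[OF V, of snd] by simp
  have sw: "(\<Sum>v\<in>q ` R. \<Sum>x\<in>UNIV. F x v) = (\<Sum>w\<in>V. F (fst w) (snd w))" for F :: "bool \<Rightarrow> 'a \<Rightarrow> real"
    unfolding V_def using sum2[of F UNIV "q ` R"] by (simp add: sum.swap[of _ "q ` R"])
  show ?thesis
    unfolding t sw E1 E2 by (simp add: sum_subtractf sum_negf)
qed

end



lemma idx_Suc: "idx (Suc n) b = 2 * idx n b + (if b n then 1 else 0)"
proof -
  have "idx (Suc n) b = (\<Sum>j<Suc n. if b j then 2 ^ (n - j) else 0)"
    unfolding idx_def by (intro sum.cong refl) auto
  also have "\<dots> = (\<Sum>j<n. if b j then 2 ^ (n - j) else 0) + (if b n then 1 else 0)"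
    by simp
  also have "(\<Sum>j<n. if b j then 2 ^ (n - j) else 0) = (\<Sum>j<n. 2 * (if b j then 2 ^ (n - 1 - j) else 0::nat))"
  proof (intro sum.cong refl)
    fix j assume "j \<in> {..<n}"
    hence "n - j = Suc (n - 1 - j)" by auto
    thus "(if b j then 2 ^ (n - j) else 0) = 2 * (if b j then 2 ^ (n - 1 - j) else 0::nat)" by simp
  qed
  also have "\<dots> = 2 * idx n b" unfolding idx_def by (simp add: sum_distrib_left)
  finally show ?thesis by simp
qed

lemma idx_lt: "idx n b < 2 ^ n"
  by (induction n) (auto simp: idx_Suc idx_def[of 0])

lemma div2_aux: "(e::nat) \<le> 1 \<Longrightarrow> (2 * x + e = c) = (x = c div 2 \<and> e = c mod 2)"
  by presburger

lemma mod2_aux: "((if B then 1 else 0) = (c::nat) mod 2) = (B = odd c)"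
  by (cases B) (auto simp: even_iff_mod_2_eq_zero odd_iff_mod_2_eq_one)

lemma idx_eq: "c < 2 ^ n \<Longrightarrow> (idx n b = c) \<longleftrightarrow> (\<forall>j<n. b j = bit c (n - 1 - j))"
proof (induction n arbitrary: c)
  case 0 then show ?case by (simp add: idx_def)
next
  case (Suc n)
  have lt: "c div 2 < 2 ^ n" using Suc.prems by simp
  have "idx (Suc n) b = c \<longleftrightarrow> idx n b = c div 2 \<and> b n = odd c"
    unfolding idx_Suc using div2_aux[of "if b n then 1 else 0" "idx n b" c] mod2_aux[of "b n" c] by auto
  also have "\<dots> \<longleftrightarrow> (\<forall>j<n. b j = bit (c div 2) (n - 1 - j)) \<and> b n = odd c"
    using Suc.IH[OF lt] by simp
  also have "\<dots> \<longleftrightarrow> (\<forall>j<Suc n. b j = bit c (Suc n - 1 - j))"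
  proof -
    have "bit (c div 2) (n - 1 - j) = bit c (Suc n - 1 - j)" if "j < n" for j
    proof -
      have "Suc n - 1 - j = Suc (n - 1 - j)" using that by auto
      thus ?thesis by (simp add: bit_Suc)
    qed
    moreover have "bit c (Suc n - 1 - n) = odd c" by (simp add: bit_0)
    ultimately show ?thesis by (auto simp: less_Suc_eq)
  qed
  finally show ?case .
qed

lemma coin_pps: "product_prob_space (\<lambda>_::nat. measure_pmf (bernoulli_pmf (1/2)))"
  by (rule product_prob_spaceI) (rule prob_space_measure_pmf)

lemma space_coin: "space coin = UNIV"
  unfolding coin_def by (simp add: space_PiM)

lemma prob_coin: "prob_space coin"
proof -
  interpret pps: product_prob_space "\<lambda>_::nat. measure_pmf (bernoulli_pmf (1/2))" UNIV by (rule coin_pps)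
  show ?thesis unfolding coin_def by (rule pps.P.prob_space_axioms)
qed

lemma idx_set:
  assumes "c < 2 ^ n"
  shows "{b \<in> space coin. idx n b = c} = {b \<in> space coin. \<forall>j\<in>{..<n}. b j \<in> {bit c (n - 1 - j)}}"
  using idx_eq[OF assms] by auto

lemma idx_sets: "{b \<in> space coin. idx n b = c} \<in> sets coin"
proof (cases "c < 2 ^ n")
  case True
  have "{b \<in> space coin. \<forall>j\<in>{..<n}. b j \<in> {bit c (n - 1 - j)}} \<in> sets coin"
    unfolding coin_def
    by (intro sets.sets_Collect_finite_All) (auto intro!: measurable_sets[OF measurable_component_singleton])
  then show ?thesis using idx_set[OF True] by simp
next
  case False
  hence "{b \<in> space coin. idx n b = c} = {}" using idx_lt[of n] by (auto simp: not_less dest: leD)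
  then show ?thesis by (metis sets.empty_sets)
qed

lemma idx_meas: "idx n \<in> measurable coin (count_space UNIV)"
proof -
  have "idx n -` {c} \<inter> space coin \<in> sets coin" for c
  proof -
    have "idx n -` {c} \<inter> space coin = {b \<in> space coin. idx n b = c}" by auto
    thus ?thesis using idx_sets by simp
  qed
  thus ?thesis by (subst measurable_count_space_eq2_countable) auto
qed

lemma idx_measure: "c < 2 ^ n \<Longrightarrow> emeasure coin {b \<in> space coin. idx n b = c} = ennreal (1 / 2 ^ n)"
proof -
  assume c: "c < 2 ^ n"
  interpret pps: product_prob_space "\<lambda>_::nat. measure_pmf (bernoulli_pmf (1/2))" UNIV by (rule coin_pps)
  have "emeasure coin {b \<in> space coin. idx n b = c}
      = emeasure coin {b \<in> space coin. \<forall>j\<in>{..<n}. b j \<in> {bit c (n - 1 - j)}}"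
    using idx_set[OF c] by simp
  also have "\<dots> = (\<Prod>j\<in>{..<n}. emeasure (measure_pmf (bernoulli_pmf (1/2))) {bit c (n - 1 - j)})"
    unfolding coin_def by (rule pps.emeasure_PiM_Collect) auto
  also have "\<dots> = (\<Prod>j\<in>{..<n}. ennreal (1/2))"
    by (intro prod.cong refl) (simp add: emeasure_pmf_single)
  also have "\<dots> = ennreal (1/2) ^ n" by simp
  also have "\<dots> = ennreal ((1/2) ^ n)" by (subst ennreal_power) auto
  also have "\<dots> = ennreal (1 / 2 ^ n)" by (simp add: power_one_over)
  finally show ?thesis .
qed

lemma idx_integral:
  fixes d :: "nat \<Rightarrow> real"
  assumes d: "\<And>c. 0 \<le> d c"
  shows "(\<integral>\<^sup>+ b. ennreal (d (idx n b)) \<partial>coin) = ennreal ((\<Sum>c<2^n. d c) / 2 ^ n)"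
proof -
  have "(\<integral>\<^sup>+ b. ennreal (d (idx n b)) \<partial>coin)
      = (\<integral>\<^sup>+ b. (\<Sum>c<2^n. ennreal (d c) * indicator {b \<in> space coin. idx n b = c} b) \<partial>coin)"
  proof (intro nn_integral_cong)
    fix b assume "b \<in> space coin"
    have "(\<Sum>c<2^n. ennreal (d c) * indicator {b \<in> space coin. idx n b = c} b)
        = (\<Sum>c<2^n. if c = idx n b then ennreal (d c) else 0)"
      using \<open>b \<in> space coin\<close> by (intro sum.cong refl) (auto simp: indicator_def)
    also have "\<dots> = ennreal (d (idx n b))" using idx_lt[of n b] by (simp add: sum.delta)
    finally show "ennreal (d (idx n b)) = (\<Sum>c<2^n. ennreal (d c) * indicator {b \<in> space coin. idx n b = c} b)" by simp
  qed
  also have "\<dots> = (\<Sum>c<2^n. \<integral>\<^sup>+ b. ennreal (d c) * indicator {b \<in> space coin. idx n b = c} b \<partial>coin)"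
    by (intro nn_integral_sum) (auto intro!: borel_measurable_indicator idx_sets borel_measurable_times_ennreal)
  also have "\<dots> = (\<Sum>c<2^n. ennreal (d c) * ennreal (1 / 2 ^ n))"
    by (intro sum.cong refl) (simp add: nn_integral_cmult_indicator idx_sets idx_measure)
  also have "\<dots> = ennreal ((\<Sum>c<2^n. d c) / 2 ^ n)"
    using d by (simp add: ennreal_mult[symmetric] sum_ennreal sum_divide_distrib)
  finally show ?thesis .
qed

lemma coin_AE_zero:
  fixes d :: "nat \<Rightarrow> nat \<Rightarrow> real" and L :: real
  assumes d0: "\<And>n c. 0 \<le> d n c" and ds: "\<And>n. (\<Sum>c<2^n. d n c) \<le> L"
  shows "AE b in coin. (\<lambda>n. d n (idx n b)) \<longlonglongrightarrow> 0"
proof -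
  have "d 0 0 \<le> L" using ds[of 0] by simp
  hence L: "0 \<le> L" using d0[of 0 0] by linarith
  have meas: "(\<lambda>b. ennreal (d n (idx n b))) \<in> borel_measurable coin" for n
    using measurable_compose[OF idx_meas, of "\<lambda>c. ennreal (d n c)" borel n] by simp
  have "(\<integral>\<^sup>+ b. (\<Sum>n. ennreal (d n (idx n b))) \<partial>coin) = (\<Sum>n. \<integral>\<^sup>+ b. ennreal (d n (idx n b)) \<partial>coin)"
    using meas by (rule nn_integral_suminf)
  also have "\<dots> = (\<Sum>n. ennreal ((\<Sum>c<2^n. d n c) / 2 ^ n))"
    using d0 by (simp add: idx_integral)
  also have "\<dots> \<le> (\<Sum>n. ennreal (L * (1/2) ^ n))"
    using ds by (intro suminf_le summableI ennreal_leI) (simp add: divide_right_mono power_one_over)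
  also have "\<dots> = ennreal (\<Sum>n. L * (1/2) ^ n)"
    using L by (intro suminf_ennreal2) (auto intro!: summable_mult summable_geometric)
  also have "\<dots> < top" by simp
  finally have fin: "(\<integral>\<^sup>+ b. (\<Sum>n. ennreal (d n (idx n b))) \<partial>coin) \<noteq> top" by simp
  have fin': "(\<integral>\<^sup>+ b. (\<Sum>n. ennreal (d n (idx n b))) \<partial>coin) \<noteq> \<infinity>" using fin by simp
  have "AE b in coin. (\<Sum>n. ennreal (d n (idx n b))) \<noteq> \<infinity>"
    using meas by (intro nn_integral_PInf_AE[OF _ fin']) (simp add: borel_measurable_suminf)
  thus ?thesis
  proof (rule AE_mp, intro AE_I2 impI)
    fix b assume "(\<Sum>n. ennreal (d n (idx n b))) \<noteq> \<infinity>"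
    hence "summable (\<lambda>n. d n (idx n b))" using d0 by (intro summable_suminf_not_top) auto
    thus "(\<lambda>n. d n (idx n b)) \<longlonglongrightarrow> 0" by (rule summable_LIMSEQ_zero)
  qed
qed




definition simple_rv :: "'w measure \<Rightarrow> ('w \<Rightarrow> 'r) \<Rightarrow> bool" where
  "simple_rv M W \<longleftrightarrow> finite (W ` space M) \<and> (\<forall>r. {w \<in> space M. W w = r} \<in> sets M)"

lemma Pev_cong: "(\<And>w. w \<in> space M \<Longrightarrow> P w = P' w) \<Longrightarrow> Pev M P = Pev M P'"
  unfolding Pev_def by (rule arg_cong[where f="measure M"]) auto

lemma Pev_W:
  assumes "prob_space M" "simple_rv M W"
  shows "Pev M (\<lambda>w. P (W w)) = (\<Sum>r\<in>W ` space M. if P r then Pev M (\<lambda>w. W w = r) else 0)"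
proof -
  interpret prob_space M by fact
  let ?A = "\<lambda>r. {w \<in> space M. W w = r}"
  have "{w \<in> space M. P (W w)} = (\<Union>r\<in>{r\<in>W ` space M. P r}. ?A r)" by auto
  hence "Pev M (\<lambda>w. P (W w)) = measure M (\<Union>r\<in>{r\<in>W ` space M. P r}. ?A r)" unfolding Pev_def by simp
  also have "\<dots> = (\<Sum>r\<in>{r\<in>W ` space M. P r}. measure M (?A r))"
    using assms(2) unfolding simple_rv_def
    by (intro finite_measure_finite_Union) (auto simp: disjoint_family_on_def)
  also have "\<dots> = (\<Sum>r\<in>W ` space M. if P r then measure M (?A r) else 0)"
    using assms(2) unfolding simple_rv_def by (simp add: sum.inter_filter)
  finally show ?thesis unfolding Pev_def .
qed

lemma wset_W:
  assumes "prob_space M" "simple_rv M W"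
  shows "wset (W ` space M) (\<lambda>r. Pev M (\<lambda>w. W w = r))"
proof
  show "finite (W ` space M)" using assms(2) unfolding simple_rv_def by simp
  show "0 \<le> Pev M (\<lambda>w. W w = r)" for r unfolding Pev_def by simp
  have "Pev M (\<lambda>w. (\<lambda>_. True) (W w)) = 1"
    using assms(1) unfolding Pev_def by (simp add: prob_space.prob_space)
  thus "(\<Sum>r\<in>W ` space M. Pev M (\<lambda>w. W w = r)) = 1"
    using Pev_W[OF assms, of "\<lambda>_. True"] by simp
qed

lemma Pev_prw:
  assumes "prob_space M" "simple_rv M W"
  shows "Pev M (\<lambda>w. f (W w) = v) = prw (W ` space M) (\<lambda>r. Pev M (\<lambda>w. W w = r)) f v"
  unfolding prw_def using Pev_W[OF assms, of "\<lambda>r. f r = v"] by simp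

lemma M_facts:
  fixes u :: "'r \<Rightarrow> bool" and q :: "'r \<Rightarrow> 'a"
  assumes M: "prob_space M" and W: "simple_rv M W"
    and U: "\<And>w. w \<in> space M \<Longrightarrow> U w = u (W w)" and Q: "\<And>w. w \<in> space M \<Longrightarrow> Q w = q (W w)"
  shows "Hc M U Q = ent (W ` space M) (\<lambda>r. Pev M (\<lambda>w. W w = r)) (\<lambda>r. (u r, q r))
                    - ent (W ` space M) (\<lambda>r. Pev M (\<lambda>w. W w = r)) q"
    and "zkh (Zc M U Q) (Kc M U Q) (Hc M U Q)"
proof -
  define R where "R = W ` space M"
  define p where "p r = Pev M (\<lambda>w. W w = r)" for r
  interpret wset R p unfolding R_def p_def by (rule wset_W[OF M W])
  have QR: "Q ` space M = q ` R" unfolding R_def using Q by (auto simp: image_iff)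
  have J: "jp M U Q x v = prw R p (\<lambda>r. (u r, q r)) (x, v)" for x v
  proof -
    have "jp M U Q x v = Pev M (\<lambda>w. (\<lambda>r. (u r, q r)) (W w) = (x, v))"
      unfolding jp_def using U Q by (intro Pev_cong) auto
    also have "\<dots> = prw R p (\<lambda>r. (u r, q r)) (x, v)" unfolding R_def p_def by (rule Pev_prw[OF M W])
    finally show ?thesis .
  qed
  have PQ: "Pev M (\<lambda>w. Q w = v) = prw R p q v" for v
  proof -
    have "Pev M (\<lambda>w. Q w = v) = Pev M (\<lambda>w. q (W w) = v)" using Q by (intro Pev_cong) auto
    also have "\<dots> = prw R p q v" unfolding R_def p_def by (rule Pev_prw[OF M W])
    finally show ?thesis .
  qed
  have H1: "Hc M U Q = ent R p (\<lambda>r. (u r, q r)) - ent R p q"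
    unfolding Hc_def QR J PQ by (rule hc_ent)
  thus "Hc M U Q = ent (W ` space M) (\<lambda>r. Pev M (\<lambda>w. W w = r)) (\<lambda>r. (u r, q r))
                    - ent (W ` space M) (\<lambda>r. Pev M (\<lambda>w. W w = r)) q"
    unfolding R_def p_def .
  define a where "a v = prw R p (\<lambda>r. (u r, q r)) (False, v)" for v
  define b where "b v = prw R p (\<lambda>r. (u r, q r)) (True, v)" for v
  have ab: "prw R p q v = a v + b v" for v unfolding a_def b_def by (rule prw_bool[symmetric])
  have H2: "Hc M U Q = (\<Sum>v\<in>q ` R. hterm (a v) (b v))"
    unfolding Hc_def QR J PQ by (intro sum.cong refl) (simp add: UNIV_bool hterm_def ab a_def[symmetric] b_def[symmetric])
  have Z2: "Zc M U Q = 2 * (\<Sum>v\<in>q ` R. sqrt (a v * b v))"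
    unfolding Zc_def QR J a_def b_def ..
  have K2: "Kc M U Q = (\<Sum>v\<in>q ` R. \<bar>a v - b v\<bar>)"
    unfolding Kc_def QR J a_def b_def ..
  have tot1: "(\<Sum>v\<in>q ` R. a v + b v) = 1"
    unfolding ab[symmetric] using fin by (intro prw_total) auto
  show "zkh (Zc M U Q) (Kc M U Q) (Hc M U Q)"
    unfolding H2 Z2 K2 using fin tot1 by (intro zkh_sum) (auto simp: a_def b_def prw_nn)
qed

definition Wn :: "(int \<Rightarrow> 'w \<Rightarrow> bool) \<Rightarrow> (int \<Rightarrow> 'w \<Rightarrow> 'y) \<Rightarrow> (int \<Rightarrow> 'w \<Rightarrow> 's) \<Rightarrow> nat \<Rightarrow> 'w
    \<Rightarrow> bool list \<times> 'y list \<times> 's \<times> 's" where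
  "Wn X Y S n w = (map (\<lambda>a. X (int a + 1) w) [0..<2 ^ n], map (\<lambda>a. Y (int a + 1) w) [0..<2 ^ n], S (2 ^ n) w, S 0 w)"

definition uu :: "nat \<Rightarrow> nat \<Rightarrow> bool list \<times> 'y list \<times> 's \<times> 's \<Rightarrow> bool" where
  "uu n c r = polar_U n (\<lambda>a. fst r ! a) c"

definition qq :: "nat \<Rightarrow> nat \<Rightarrow> bool list \<times> 'y list \<times> 's \<times> 's \<Rightarrow> bool list \<times> 'y list" where
  "qq n c r = (map (\<lambda>k. uu n k r) [0..<c], fst (snd r))"

definition TT :: "bool list \<times> 'y list \<times> 's \<times> 's \<Rightarrow> 's \<times> 's" where
  "TT r = snd (snd r)"

lemma Urv_Wn: "Urv X n c w = uu n c (Wn X Y S n w)"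
  unfolding Urv_def uu_def Wn_def polar_U_def by (intro arg_cong[where f="\<lambda>A. odd (card A)"]) auto

lemma Qrv_Wn: "Qrv X Y n c w = qq n c (Wn X Y S n w)"
  unfolding Qrv_def qq_def by (simp add: Urv_Wn[of X n _ w Y S]) (simp add: Wn_def)

lemma Qhat_Wn: "Qhat X Y S n c w = (qq n c (Wn X Y S n w), TT (Wn X Y S n w))"
  unfolding Qhat_def TT_def by (simp add: Qrv_Wn[of X Y n c w S]) (simp add: Wn_def)

lemma meas_eq_set: "f \<in> measurable M (count_space UNIV) \<Longrightarrow> {w \<in> space M. f w = c} \<in> sets M"
proof -
  assume f: "f \<in> measurable M (count_space UNIV)"
  have "{w \<in> space M. f w = c} = f -` {c} \<inter> space M" by auto
  thus ?thesis using measurable_sets[OF f, of "{c}"] by simp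
qed

lemma map_upt_eq: "(map f [0..<N] = xs) \<longleftrightarrow> (length xs = N \<and> (\<forall>a\<in>{..<N}. f a = xs ! a))"
  by (auto simp: list_eq_iff_nth_eq)

lemma simple_Wn:
  fixes X :: "int \<Rightarrow> 'w \<Rightarrow> bool" and Y :: "int \<Rightarrow> 'w \<Rightarrow> 'y::finite" and S :: "int \<Rightarrow> 'w \<Rightarrow> 's::finite"
  assumes F: "faim M X Y S"
  shows "simple_rv M (Wn X Y S n)"
  unfolding simple_rv_def
proof
  have "Wn X Y S n ` space M \<subseteq> {xs. set xs \<subseteq> UNIV \<and> length xs = 2 ^ n} \<times> {ys. set ys \<subseteq> (UNIV :: 'y set) \<and> length ys = 2 ^ n} \<times> UNIV"
    unfolding Wn_def by auto
  moreover have "finite ({xs. set xs \<subseteq> (UNIV :: bool set) \<and> length xs = 2 ^ n} \<times> {ys. set ys \<subseteq> (UNIV :: 'y set) \<and> length ys = 2 ^ n} \<times> (UNIV :: ('s \<times> 's) set))"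
    by (intro finite_cartesian_product finite_lists_length_eq) auto
  ultimately show "finite (Wn X Y S n ` space M)" by (rule finite_subset)
  have mX: "\<And>j. X j \<in> measurable M (count_space UNIV)" and mY: "\<And>j. Y j \<in> measurable M (count_space UNIV)"
    and mS: "\<And>j. S j \<in> measurable M (count_space UNIV)" using F unfolding faim_def by auto
  show "\<forall>r. {w \<in> space M. Wn X Y S n w = r} \<in> sets M"
  proof
    fix r :: "bool list \<times> 'y list \<times> 's \<times> 's"
    obtain xs ys s1 s0 where r: "r = (xs, ys, s1, s0)" by (cases r) auto
    have "{w \<in> space M. Wn X Y S n w = r} = {w \<in> space M. length xs = 2 ^ n \<and> length ys = 2 ^ n
        \<and> (\<forall>a\<in>{..<2 ^ n}. X (int a + 1) w = xs ! a) \<and> (\<forall>a\<in>{..<2 ^ n}. Y (int a + 1) w = ys ! a)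
        \<and> S (2 ^ n) w = s1 \<and> S 0 w = s0}"
      unfolding Wn_def r by (simp add: map_upt_eq) blast
    also have "\<dots> \<in> sets M"
      by (intro sets.sets_Collect_conj sets.sets_Collect_const sets.sets_Collect_finite_All meas_eq_set mX mY mS) auto
    finally show "{w \<in> space M. Wn X Y S n w = r} \<in> sets M" .
  qed
qed

lemma chain:
  fixes X :: "int \<Rightarrow> 'w \<Rightarrow> bool" and Y :: "int \<Rightarrow> 'w \<Rightarrow> 'y::finite" and S :: "int \<Rightarrow> 'w \<Rightarrow> 's::finite"
  assumes F: "faim M X Y S"
  shows "(\<Sum>c<2 ^ n. Hc M (Urv X n c) (Qrv X Y n c) - Hc M (Urv X n c) (Qhat X Y S n c)) \<le> log 2 (real CARD('s \<times> 's))"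
    and "0 \<le> Hc M (Urv X n c) (Qrv X Y n c) - Hc M (Urv X n c) (Qhat X Y S n c)"
proof -
  have M: "prob_space M" using F unfolding faim_def by simp
  have W: "simple_rv M (Wn X Y S n)" by (rule simple_Wn[OF F])
  define R where "R = Wn X Y S n ` space M"
  define p where "p r = Pev M (\<lambda>w. Wn X Y S n w = r)" for r
  interpret wset R p unfolding R_def p_def by (rule wset_W[OF M W])
  have H: "Hc M (Urv X n c) (Qrv X Y n c) = ent R p (\<lambda>r. (uu n c r, qq n c r)) - ent R p (qq n c)" for c
    unfolding R_def p_def by (rule M_facts(1)[OF M W]) (simp_all add: Urv_Wn[of X n c _ Y S] Qrv_Wn[of X Y n c _ S])
  have Hh: "Hc M (Urv X n c) (Qhat X Y S n c) = ent R p (\<lambda>r. (uu n c r, (qq n c r, TT r))) - ent R p (\<lambda>r. (qq n c r, TT r))" for c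
    unfolding R_def p_def by (rule M_facts(1)[OF M W]) (simp_all add: Urv_Wn[of X n c _ Y S] Qhat_Wn[of X Y S n c])
  show "0 \<le> Hc M (Urv X n c) (Qrv X Y n c) - Hc M (Urv X n c) (Qhat X Y S n c)"
    unfolding H Hh using cond_reduces[of "uu n c" "qq n c" TT] by simp
  define E where "E c = ent R p (qq n c)" for c
  define G where "G c = ent R p (\<lambda>r. (qq n c r, TT r))" for c
  have E: "ent R p (\<lambda>r. (uu n c r, qq n c r)) = E (Suc c)" for c
  proof -
    let ?g = "\<lambda>(x::bool, (l::bool list, y::'y list)). (l @ [x], y)"
    have "inj ?g" by (auto simp: inj_def)
    hence "ent R p (\<lambda>r. ?g (uu n c r, qq n c r)) = ent R p (\<lambda>r. (uu n c r, qq n c r))"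
      by (intro ent_inj) (auto intro: inj_on_subset)
    moreover have "(\<lambda>r. ?g (uu n c r, qq n c r)) = qq n (Suc c)" by (auto simp: qq_def)
    ultimately show ?thesis unfolding E_def by metis
  qed
  have G: "ent R p (\<lambda>r. (uu n c r, (qq n c r, TT r))) = G (Suc c)" for c
  proof -
    let ?g = "\<lambda>(x::bool, ((l::bool list, y::'y list), t::'s \<times> 's)). ((l @ [x], y), t)"
    have "inj ?g" by (auto simp: inj_def)
    hence "ent R p (\<lambda>r. ?g (uu n c r, (qq n c r, TT r))) = ent R p (\<lambda>r. (uu n c r, (qq n c r, TT r)))"
      by (intro ent_inj) (auto intro: inj_on_subset)
    moreover have "(\<lambda>r. ?g (uu n c r, (qq n c r, TT r))) = (\<lambda>r. (qq n (Suc c) r, TT r))" by (auto simp: qq_def)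
    ultimately show ?thesis unfolding G_def by metis
  qed
  have "(\<Sum>c<2 ^ n. Hc M (Urv X n c) (Qrv X Y n c) - Hc M (Urv X n c) (Qhat X Y S n c))
      = (\<Sum>c<2 ^ n. E (Suc c) - E c) - (\<Sum>c<2 ^ n. G (Suc c) - G c)"
    unfolding H Hh E G by (simp add: sum_subtractf E_def G_def)
  also have "\<dots> = (G 0 - E 0) - (G (2 ^ n) - E (2 ^ n))" by (simp only: sum_lessThan_telescope)
  also have "\<dots> \<le> log 2 (card (TT ` R)) - 0"
    using cond_ent_bounds[of "qq n 0" TT] cond_ent_bounds[of "qq n (2 ^ n)" TT] unfolding E_def G_def
    by (intro diff_mono) auto
  also have "\<dots> \<le> log 2 (real CARD('s \<times> 's))"
  proof -
    have "0 < card (TT ` R)" using fin R_ne by (simp add: card_gt_0_iff)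
    moreover have "card (TT ` R) \<le> CARD('s \<times> 's)" by (rule card_mono) auto
    hence "real (card (TT ` R)) \<le> real CARD('s \<times> 's)" by (simp only: of_nat_le_iff)
    ultimately show ?thesis by (simp del: card_prod)
  qed
  finally show "(\<Sum>c<2 ^ n. Hc M (Urv X n c) (Qrv X Y n c) - Hc M (Urv X n c) (Qhat X Y S n c)) \<le> log 2 (real CARD('s \<times> 's))" .
qed

theorem corollary2:
  fixes M :: "'w measure"
    and X :: "int \<Rightarrow> 'w \<Rightarrow> bool"
    and Y :: "int \<Rightarrow> 'w \<Rightarrow> 'y::finite"
    and S :: "int \<Rightarrow> 'w \<Rightarrow> 's::finite"
    and Hinf :: "(nat \<Rightarrow> bool) \<Rightarrow> real"
  assumes "faim M X Y S"
    and "polarizes coin (Hproc M X Y) Hinf"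
  shows "(\<exists>Zinf Zhinf. polarizes coin (Zproc M X Y) Zinf \<and> polarizes coin (Zhat_proc M X Y S) Zhinf
            \<and> (AE b in coin. Zinf b = Hinf b) \<and> (AE b in coin. Zhinf b = Hinf b))
       \<and> (\<exists>Kinf Khinf. polarizes coin (Kproc M X Y) Kinf \<and> polarizes coin (Khat_proc M X Y S) Khinf
            \<and> (AE b in coin. Kinf b = 1 - Hinf b) \<and> (AE b in coin. Khinf b = 1 - Hinf b))"
proof -
  note F = assms(1)
  have M: "prob_space M" using F unfolding faim_def by simp
  have W: "simple_rv M (Wn X Y S n)" for n by (rule simple_Wn[OF F])
  have Hm: "Hinf \<in> borel_measurable coin" and Hl: "AE b in coin. (\<lambda>n. Hproc M X Y n b) \<longlonglongrightarrow> Hinf b"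
    and H01: "AE b in coin. Hinf b \<in> {0, 1}" using assms(2) unfolding polarizes_def by auto
  define d where "d n c = Hc M (Urv X n c) (Qrv X Y n c) - Hc M (Urv X n c) (Qhat X Y S n c)" for n c
  have D: "AE b in coin. (\<lambda>n. d n (idx n b)) \<longlonglongrightarrow> 0"
    unfolding d_def by (rule coin_AE_zero) (rule chain[OF F])+
  have zk: "zkh (Zproc M X Y n b) (Kproc M X Y n b) (Hproc M X Y n b)" for n b
    unfolding Zproc_def Kproc_def Hproc_def
    by (rule M_facts(2)[OF M W]) (simp_all add: Urv_Wn[of X n _ _ Y S] Qrv_Wn[of X Y n _ _ S])
  have zkh: "zkh (Zhat_proc M X Y S n b) (Khat_proc M X Y S n b) (Hproc M X Y n b - d n (idx n b))" for n b
  proof -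
    have "zkh (Zhat_proc M X Y S n b) (Khat_proc M X Y S n b) (Hc M (Urv X n (idx n b)) (Qhat X Y S n (idx n b)))"
      unfolding Zhat_proc_def Khat_proc_def
      by (rule M_facts(2)[OF M W]) (simp_all add: Urv_Wn[of X n _ _ Y S] Qhat_Wn[of X Y S n])
    thus ?thesis unfolding d_def Hproc_def by simp
  qed
  have lim: "AE b in coin. ((\<lambda>n. Zproc M X Y n b) \<longlonglongrightarrow> Hinf b \<and> (\<lambda>n. Kproc M X Y n b) \<longlonglongrightarrow> 1 - Hinf b)
     \<and> ((\<lambda>n. Zhat_proc M X Y S n b) \<longlonglongrightarrow> Hinf b \<and> (\<lambda>n. Khat_proc M X Y S n b) \<longlonglongrightarrow> 1 - Hinf b)"
    using Hl H01 D
  proof eventually_elim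
    case (elim b)
    have L: "Hinf b = 0 \<or> Hinf b = 1" using elim(2) by simp
    have h2: "(\<lambda>n. Hproc M X Y n b - d n (idx n b)) \<longlonglongrightarrow> Hinf b - 0"
      using elim(1) elim(3) by (rule tendsto_diff)
    show ?case
      using zkh_lim[of "\<lambda>n. Zproc M X Y n b" "\<lambda>n. Kproc M X Y n b" "\<lambda>n. Hproc M X Y n b", OF zk elim(1) L]
        zkh_lim[of "\<lambda>n. Zhat_proc M X Y S n b" "\<lambda>n. Khat_proc M X Y S n b" "\<lambda>n. Hproc M X Y n b - d n (idx n b)", OF zkh _ L] h2
      by simp
  qed
  have Km: "(\<lambda>b. 1 - Hinf b) \<in> borel_measurable coin" using Hm by simp
  have K01: "AE b in coin. 1 - Hinf b \<in> {0, 1}" using H01 by eventually_elim auto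
  have P1: "polarizes coin (Zproc M X Y) Hinf" unfolding polarizes_def
    using Hm H01 lim by (auto elim: AE_mp intro!: AE_I2)
  have P2: "polarizes coin (Zhat_proc M X Y S) Hinf" unfolding polarizes_def
    using Hm H01 lim by (auto elim: AE_mp intro!: AE_I2)
  have P3: "polarizes coin (Kproc M X Y) (\<lambda>b. 1 - Hinf b)" unfolding polarizes_def
    using Km K01 lim by (auto elim: AE_mp intro!: AE_I2)
  have P4: "polarizes coin (Khat_proc M X Y S) (\<lambda>b. 1 - Hinf b)" unfolding polarizes_def
    using Km K01 lim by (auto elim: AE_mp intro!: AE_I2)
  show ?thesis using P1 P2 P3 P4 by auto
qed


end
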